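(* Let $G\le\mathrm{Aut}(\mathcal{T}_d)$ be any self-similar group. Then every non-trivial element of the Röver–Nekrashevych group $V_d(G)$ has infinitely many $F_d$-conjugates; equivalently, the inclusion $L(F_d)\subseteq L(V_d(G))$ is irreducible.
   Context: Fix $d\ge2$. $\mathcal{T}_d$ is the infinite rooted $d$-regular tree with vertex set $\{1,\dots,d\}^*$ (finite words, root the empty word), $w$ adjacent to $wi$. Every automorphism permutes the level-1 vertices, giving $\rho:\mathrm{Aut}(\mathcal{T}_d)\to S_d$. Let $\mathcal{T}_d(i)$ be the subtree spanned by words $iw$ and $\delta_i:\mathcal{T}_d\to\mathcal{T}_d(i)$, $w\mapsto iw$. For $g\in\mathrm{Aut}(\mathcal{T}_d)$ put $\phi_i(g)=\delta^{-1}_{\rho(g)i}\circ g|_{\mathcal{T}_d(i)}\circ\delta_i$. $G\le\mathrm{Aut}(\mathcal{T}_d)$ is self-similar if $\phi_i(G)\subseteq G$ for all $i$. Let $C_d=\{1,\dots,d\}^{\mathbb{N}}$, and for $w\in\{1,\dots,d\}^*$ let $C_d(w)=\{w\kappa:\kappa\in C_d\}$ with homeomorphism $h_w:C_d\to C_d(w)$, $\kappa\mapsto w\kappa$. $V_d(G)$ is the group of homeomorphisms of $C_d$ obtained by choosing two partitions of $C_d$ into the same number $n$ of cones $C_d(w_1^+),\dots,C_d(w_n^+)$ and $C_d(w_1^-),\dots,C_d(w_n^-)$, a bijection $i\mapsto j(i)$, and $g_1,\dots,g_n\in G$, and mapping $C_d(w_i^+)$ to $C_d(w_{j(i)}^-)$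 via $h_{w_{j(i)}^-}\circ g_i\circ h_{w_i^+}^{-1}$. $F_d\le V_d(G)$ is the subgroup of such homeomorphisms with all $g_i=1$ that preserve the lexicographic order of $C_d$. An inclusion $N\subseteq M$ of von Neumann algebras is irreducible if $N'\cap M\subseteq N$. $L(G)$ is the group von Neumann algebra. *)

theory Defs
  imports Main
begin

definition words :: "nat \<Rightarrow> nat list set" where
  "words d = {w. set w \<subseteq> {1..d}}"

definition tree_adj :: "nat \<Rightarrow> nat list \<Rightarrow> nat list \<Rightarrow> bool" where
  "tree_adj d v w \<longleftrightarrow> (\<exists>i\<in>{1..d}. w = v @ [i] \<or> v = w @ [i])"

text \<open>Automorphisms of T_d, represented extensionally (identity off the vertex set).\<close>
definition tree_aut :: "nat \<Rightarrow> (nat list \<Rightarrow> nat list) \<Rightarrow> bool" where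
  "tree_aut d g \<longleftrightarrow> bij_betw g (words d) (words d)
     \<and> (\<forall>v\<in>words d. \<forall>w\<in>words d. tree_adj d v w \<longleftrightarrow> tree_adj d (g v) (g w))
     \<and> (\<forall>x. x \<notin> words d \<longrightarrow> g x = x)"

definition aut_subgroup :: "nat \<Rightarrow> (nat list \<Rightarrow> nat list) set \<Rightarrow> bool" where
  "aut_subgroup d G \<longleftrightarrow> G \<subseteq> {g. tree_aut d g} \<and> id \<in> G
     \<and> (\<forall>a\<in>G. \<forall>b\<in>G. a \<circ> b \<in> G) \<and> (\<forall>a\<in>G. inv a \<in> G)"

text \<open>phi_i(g) = delta^{-1}_{rho(g) i} o g|_{T_d(i)} o delta_i.\<close>
definition sec :: "nat \<Rightarrow> nat \<Rightarrow> (nat list \<Rightarrow> nat list) \<Rightarrow> nat list \<Rightarrow> nat list" where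
  "sec d i g = (\<lambda>w. if w \<in> words d then tl (g (i # w)) else w)"

definition self_similar :: "nat \<Rightarrow> (nat list \<Rightarrow> nat list) set \<Rightarrow> bool" where
  "self_similar d G \<longleftrightarrow> aut_subgroup d G \<and> (\<forall>g\<in>G. \<forall>i\<in>{1..d}. sec d i g \<in> G)"

definition cantor :: "nat \<Rightarrow> (nat \<Rightarrow> nat) set" where
  "cantor d = {\<kappa>. \<forall>n. \<kappa> n \<in> {1..d}}"

definition cone :: "nat \<Rightarrow> nat list \<Rightarrow> (nat \<Rightarrow> nat) set" where
  "cone d w = {\<kappa> \<in> cantor d. \<forall>n<length w. \<kappa> n = w ! n}"

definition hw :: "nat list \<Rightarrow> (nat \<Rightarrow> nat) \<Rightarrow> (nat \<Rightarrow> nat)" where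
  "hw w \<kappa> = (\<lambda>n. if n < length w then w ! n else \<kappa> (n - length w))"

definition bact :: "(nat list \<Rightarrow> nat list) \<Rightarrow> (nat \<Rightarrow> nat) \<Rightarrow> (nat \<Rightarrow> nat)" where
  "bact g \<kappa> = (\<lambda>n. g (map \<kappa> [0..<Suc n]) ! n)"

text \<open>Elements of V_d(G) given by data (n, w+, w-, j, g), as homeomorphisms of C_d
  represented extensionally (identity outside C_d).\<close>
definition V_data :: "nat \<Rightarrow> (nat list \<Rightarrow> nat list) set \<Rightarrow> ((nat \<Rightarrow> nat) \<Rightarrow> (nat \<Rightarrow> nat))
   \<Rightarrow> nat \<Rightarrow> (nat \<Rightarrow> nat list) \<Rightarrow> (nat \<Rightarrow> nat list) \<Rightarrow> (nat \<Rightarrow> nat)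
   \<Rightarrow> (nat \<Rightarrow> nat list \<Rightarrow> nat list) \<Rightarrow> bool" where
  "V_data d G f n wp wm j gs \<longleftrightarrow>
     (\<forall>k<n. wp k \<in> words d \<and> wm k \<in> words d \<and> gs k \<in> G)
   \<and> (\<forall>k<n. \<forall>l<n. k \<noteq> l \<longrightarrow> cone d (wp k) \<inter> cone d (wp l) = {})
   \<and> (\<forall>k<n. \<forall>l<n. k \<noteq> l \<longrightarrow> cone d (wm k) \<inter> cone d (wm l) = {})
   \<and> (\<Union>k<n. cone d (wp k)) = cantor d
   \<and> (\<Union>k<n. cone d (wm k)) = cantor d
   \<and> bij_betw j {..<n} {..<n}
   \<and> (\<forall>k<n. \<forall>\<kappa>\<in>cantor d. f (hw (wp k) \<kappa>) = hw (wm (j k)) (bact (gs k) \<kappa>))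
   \<and> (\<forall>\<kappa>. \<kappa> \<notin> cantor d \<longrightarrow> f \<kappa> = \<kappa>)"

definition Vgrp :: "nat \<Rightarrow> (nat list \<Rightarrow> nat list) set \<Rightarrow> ((nat \<Rightarrow> nat) \<Rightarrow> (nat \<Rightarrow> nat)) set" where
  "Vgrp d G = {f. \<exists>n wp wm j gs. V_data d G f n wp wm j gs}"

definition lex_less :: "(nat \<Rightarrow> nat) \<Rightarrow> (nat \<Rightarrow> nat) \<Rightarrow> bool" where
  "lex_less \<kappa> \<mu> \<longleftrightarrow> (\<exists>n. (\<forall>m<n. \<kappa> m = \<mu> m) \<and> \<kappa> n < \<mu> n)"

definition Fgrp :: "nat \<Rightarrow> ((nat \<Rightarrow> nat) \<Rightarrow> (nat \<Rightarrow> nat)) set" where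
  "Fgrp d = {f \<in> Vgrp d {id}. \<forall>\<kappa>\<in>cantor d. \<forall>\<mu>\<in>cantor d. lex_less \<kappa> \<mu> \<longrightarrow> lex_less (f \<kappa>) (f \<mu>)}"

end

theory Submission
  imports Defs
begin


definition sh :: "nat \<Rightarrow> (nat \<Rightarrow> nat) \<Rightarrow> (nat \<Rightarrow> nat)" where
  "sh m x = (\<lambda>n. x (n + m))"

lemma hw_nth: "hw w a n = (if n < length w then w ! n else a (n - length w))"
  by (simp add: hw_def)

lemma sh_hw[simp]: "sh (length w) (hw w a) = a"
  by (simp add: sh_def hw_def)

lemma hw_inj: "hw w a = hw w b \<Longrightarrow> a = b"
  by (metis sh_hw)

lemma hw_append: "hw u (hw w a) = hw (u @ w) a"
  by (auto simp: hw_def nth_append fun_eq_iff)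

lemma hw_Nil[simp]: "hw [] a = a"
  by (simp add: hw_def)

lemma sh_0[simp]: "sh 0 x = x" by (simp add: sh_def)

lemma words_Cons[simp]: "(c # w \<in> words d) = (c \<in> {1..d} \<and> w \<in> words d)"
  by (auto simp: words_def)

lemma words_append[simp]: "(u @ w \<in> words d) = (u \<in> words d \<and> w \<in> words d)"
  by (auto simp: words_def)

lemma words_mem: "w \<in> words d \<Longrightarrow> a \<in> set w \<Longrightarrow> a \<in> {1..d}"
  unfolding words_def by blast

lemma words_Nil[simp]: "[] \<in> words d" by (simp add: words_def)

lemma hw_cantor: "w \<in> words d \<Longrightarrow> a \<in> cantor d \<Longrightarrow> hw w a \<in> cantor d"
proof -
  assume w: "w \<in> words d" and a: "a \<in> cantor d"
  have "hw w a n \<in> {1..d}" for n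
  proof (cases "n < length w")
    case True
    then have "w ! n \<in> set w" by simp
    then have "w ! n \<in> {1..d}" using w by (auto simp: words_def)
    then show ?thesis using True by (simp add: hw_def)
  next
    case False
    then show ?thesis using a by (simp add: cantor_def hw_def)
  qed
  then show ?thesis by (simp add: cantor_def)
qed

lemma hw_cone: "w \<in> words d \<Longrightarrow> a \<in> cantor d \<Longrightarrow> hw w a \<in> cone d w"
  using hw_cantor[of w d a] by (auto simp: cone_def hw_nth)

lemma sh_cantor: "x \<in> cantor d \<Longrightarrow> sh m x \<in> cantor d"
  by (auto simp: cantor_def sh_def)

lemma cone_decomp: "x \<in> cone d w \<Longrightarrow> x = hw w (sh (length w) x)"
  by (auto simp: cone_def hw_def sh_def fun_eq_iff)

lemma cone_cantor: "x \<in> cone d w \<Longrightarrow> x \<in> cantor d"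
  by (auto simp: cone_def)

lemma cone_Nil[simp]: "cone d [] = cantor d"
  by (auto simp: cone_def)

lemma cone_prefix: "x \<in> cone d w \<Longrightarrow> w = map x [0..<length w]"
  by (auto simp: cone_def intro: nth_equalityI)

lemma cone_disj:
  assumes "length w \<le> length w'" "take (length w) w' \<noteq> w"
  shows "cone d w \<inter> cone d w' = {}"
proof (rule ccontr)
  assume "cone d w \<inter> cone d w' \<noteq> {}"
  then obtain x where "x \<in> cone d w" "x \<in> cone d w'" by blast
  then have "w = map x [0..<length w]" "w' = map x [0..<length w']" using cone_prefix by blast+
  then have "take (length w) w' = w" using assms(1)
    by (metis min.absorb1 take_map take_upt add_0 )
  with assms show False by simp
qed

lemma bact_id[simp]: "bact id \<kappa> = \<kappa>"
  by (simp add: bact_def fun_eq_iff del: upt_Suc)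



definition nbr :: "nat \<Rightarrow> nat list \<Rightarrow> nat list set" where
  "nbr d x = {y \<in> words d. tree_adj d x y}"

lemma nbr_eq:
  assumes "x \<in> words d"
  shows "nbr d x = (\<lambda>i. x @ [i]) ` {1..d} \<union> (if x = [] then {} else {butlast x})"
proof -
  have "y \<in> nbr d x \<longleftrightarrow> y \<in> (\<lambda>i. x @ [i]) ` {1..d} \<union> (if x = [] then {} else {butlast x})" for y
  proof
    assume "y \<in> nbr d x"
    then obtain i where i: "i \<in> {1..d}" "y = x @ [i] \<or> x = y @ [i]"
      by (auto simp: nbr_def tree_adj_def)
    then show "y \<in> (\<lambda>i. x @ [i]) ` {1..d} \<union> (if x = [] then {} else {butlast x})"
      by auto
  next
    assume "y \<in> (\<lambda>i. x @ [i]) ` {1..d} \<union> (if x = [] then {} else {butlast x})"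
    then consider i where "i \<in> {1..d}" "y = x @ [i]" | "x \<noteq> []" "y = butlast x"
      by (auto split: if_splits)
    then show "y \<in> nbr d x"
    proof cases
      case 1
      then show ?thesis using assms by (auto simp: nbr_def tree_adj_def words_def)
    next
      case 2
      then have xe: "x = y @ [last x]" by simp
      have "y \<in> words d" using assms xe by (metis words_append)
      moreover have "last x \<in> {1..d}" using assms 2 last_in_set[of x] words_mem by blast
      ultimately show ?thesis using xe by (auto simp: nbr_def tree_adj_def)
    qed
  qed
  then show ?thesis by blast
qed
lemma card_nbr:
  assumes "x \<in> words d"
  shows "card (nbr d x) = (if x = [] then d else Suc d)"
proof -
  have inj: "inj_on (\<lambda>i. x @ [i]) {1..d}" by (auto simp: inj_on_def)
  have c1: "card ((\<lambda>i. x @ [i]) ` {1..d}) = d" using card_image[OF inj] by simp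
  have nb: "butlast x \<notin> (\<lambda>i. x @ [i]) ` {1..d}"
  proof
    assume "butlast x \<in> (\<lambda>i. x @ [i]) ` {1..d}"
    then obtain i where "butlast x = x @ [i]" by blast
    then have "length (butlast x) = length (x @ [i])" by simp
    then show False by simp
  qed
  have fin: "finite ((\<lambda>i. x @ [i]) ` {1..d})" by simp
  show ?thesis
  proof (cases "x = []")
    case True
    have "nbr d x = (\<lambda>i. x @ [i]) ` {1..d}" using True nbr_eq[OF assms] by simp
    then show ?thesis using c1 True by simp
  next
    case False
    have "nbr d x = insert (butlast x) ((\<lambda>i. x @ [i]) ` {1..d})" using False nbr_eq[OF assms] by simp
    then show ?thesis using c1 nb fin False by simp
  qed
qed

lemma aut_nbr:
  assumes g: "tree_aut d g" and x: "x \<in> words d"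
  shows "g ` nbr d x = nbr d (g x)"
proof -
  have b: "bij_betw g (words d) (words d)" and adj: "\<forall>v\<in>words d. \<forall>w\<in>words d. tree_adj d v w \<longleftrightarrow> tree_adj d (g v) (g w)"
    using g by (auto simp: tree_aut_def)
  have gx: "g x \<in> words d" using b x bij_betwE by blast
  show ?thesis
  proof
    show "g ` nbr d x \<subseteq> nbr d (g x)"
    proof
      fix z assume "z \<in> g ` nbr d x"
      then obtain y where y: "y \<in> words d" "tree_adj d x y" "z = g y" by (auto simp: nbr_def)
      have "g y \<in> words d" using b y(1) bij_betwE by blast
      moreover have "tree_adj d (g x) (g y)" using adj x y by blast
      ultimately show "z \<in> nbr d (g x)" using y by (simp add: nbr_def)
    qed
  next
    show "nbr d (g x) \<subseteq> g ` nbr d x"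
    proof
      fix z assume z: "z \<in> nbr d (g x)"
      then have "z \<in> words d" by (simp add: nbr_def)
      then obtain y where y: "y \<in> words d" "z = g y" using b unfolding bij_betw_def by blast
      then have "tree_adj d x y" using adj x z unfolding nbr_def by blast
      then show "z \<in> g ` nbr d x" using y unfolding nbr_def by blast
    qed
  qed
qed

lemma aut_root:
  assumes g: "tree_aut d g" and d: "d \<ge> 1"
  shows "g [] = []"
proof (rule ccontr)
  assume ne: "g [] \<noteq> []"
  have b: "bij_betw g (words d) (words d)" using g by (simp add: tree_aut_def)
  have gx: "g [] \<in> words d" using bij_betwE[OF b] by simp
  have "card (nbr d (g [])) = card (g ` nbr d [])" using aut_nbr[OF g words_Nil] by simp
  also have "... = card (nbr d [])"
  proof (rule card_image)
    have "inj_on g (words d)" using b by (simp add: bij_betw_def)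
    moreover have "nbr d [] \<subseteq> words d" by (auto simp: nbr_def)
    ultimately show "inj_on g (nbr d [])" by (rule inj_on_subset)
  qed
  finally have "card (nbr d (g [])) = card (nbr d [])" .
  moreover have "card (nbr d (g [])) = Suc d" using card_nbr[OF gx] ne by simp
  moreover have "card (nbr d []) = d" using card_nbr[of "[]" d] by simp
  ultimately show False by simp
qed

lemma aut_adj:
  assumes g: "tree_aut d g" and "v \<in> words d" "w \<in> words d" "tree_adj d v w"
  shows "tree_adj d (g v) (g w)"
proof -
  have "\<forall>v\<in>words d. \<forall>w\<in>words d. tree_adj d v w \<longleftrightarrow> tree_adj d (g v) (g w)"
    using g by (simp add: tree_aut_def)
  then show ?thesis using assms(2-4) by simp
qed

lemma aut_words:
  assumes g: "tree_aut d g" and "v \<in> words d"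
  shows "g v \<in> words d"
proof -
  have "bij_betw g (words d) (words d)" using g by (simp add: tree_aut_def)
  then show ?thesis using assms(2) bij_betwE by metis
qed

lemma aut_inj:
  assumes g: "tree_aut d g" and "v \<in> words d" "w \<in> words d" "g v = g w"
  shows "v = w"
proof -
  have "inj_on g (words d)" using g by (simp add: tree_aut_def bij_betw_def)
  then show ?thesis using assms(2-4) by (simp add: inj_on_def)
qed

lemma aut_length:
  assumes g: "tree_aut d g" and d: "d \<ge> 1"
  shows "\<forall>w\<in>words d. length w = n \<longrightarrow> length (g w) = n"
proof (induction n rule: less_induct)
  case (less n)
  show ?case
  proof (intro ballI impI)
    fix w assume w: "w \<in> words d" and ln: "length w = n"
    show "length (g w) = n"
    proof (cases w rule: rev_cases)
      case Nil
      then show ?thesis using aut_root[OF g d] ln by simp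
    next
      case (snoc p i)
      have p: "p \<in> words d" and i: "i \<in> {1..d}" using w snoc by auto
      have lp: "length (g p) = length p" using less p ln snoc by auto
      have "tree_adj d p w" using i snoc by (auto simp: tree_adj_def)
      then have "tree_adj d (g p) (g w)" using aut_adj[OF g p w] by simp
      then obtain a where a: "g w = g p @ [a] \<or> g p = g w @ [a]" by (auto simp: tree_adj_def)
      show ?thesis
      proof (cases "g w = g p @ [a]")
        case True
        then show ?thesis using lp ln snoc by simp
      next
        case False
        then have gp: "g p = g w @ [a]" using a by simp
        show ?thesis
        proof (cases p rule: rev_cases)
          case Nil
          then show ?thesis using gp aut_root[OF g d] by simp
        next
          case (snoc q i')
          have q: "q \<in> words d" and i': "i' \<in> {1..d}" using p snoc by auto
          have lq: "length (g q) = length q" using less q ln snoc \<open>w = p @ [i]\<close> by auto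
          have "tree_adj d q p" using i' snoc by (auto simp: tree_adj_def)
          then have "tree_adj d (g q) (g p)" using aut_adj[OF g q p] by simp
          then obtain b where "g p = g q @ [b] \<or> g q = g p @ [b]" by (auto simp: tree_adj_def)
          then have "g p = g q @ [b]" using lq lp snoc by auto
          then have "g q = g w" using gp by simp
          then have "q = w" using aut_inj[OF g q w] by simp
          then show ?thesis using snoc \<open>w = p @ [i]\<close> by simp
        qed
      qed
    qed
  qed
qed

lemma aut_len:
  assumes g: "tree_aut d g" and d: "d \<ge> 1" and w: "w \<in> words d"
  shows "length (g w) = length w"
  using aut_length[OF g d] w by blast

lemma aut_child:
  assumes g: "tree_aut d g" and d: "d \<ge> 1" and w: "w \<in> words d" and i: "i \<in> {1..d}"
  shows "\<exists>a. g (w @ [i]) = g w @ [a]"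
proof -
  have w': "w @ [i] \<in> words d" using w i by simp
  have "tree_adj d w (w @ [i])" using i by (auto simp: tree_adj_def)
  then have "tree_adj d (g w) (g (w @ [i]))" using aut_adj[OF g w w'] by simp
  then obtain a where "g (w @ [i]) = g w @ [a] \<or> g w = g (w @ [i]) @ [a]" by (auto simp: tree_adj_def)
  moreover have "length (g (w @ [i])) = Suc (length (g w))"
    using aut_len[OF g d w] aut_len[OF g d w'] by simp
  ultimately show ?thesis by auto
qed

lemma cantor_prefix_words: "\<kappa> \<in> cantor d \<Longrightarrow> map \<kappa> [0..<n] \<in> words d"
  by (auto simp: words_def cantor_def)

lemma bact_prefix:
  assumes g: "tree_aut d g" and d: "d \<ge> 1" and k: "\<kappa> \<in> cantor d"
  shows "g (map \<kappa> [0..<n]) = map (bact g \<kappa>) [0..<n]"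
proof (induction n)
  case 0
  then show ?case using aut_root[OF g d] by simp
next
  case (Suc n)
  have "\<kappa> n \<in> {1..d}" using k by (auto simp: cantor_def)
  then obtain a where a: "g (map \<kappa> [0..<n] @ [\<kappa> n]) = g (map \<kappa> [0..<n]) @ [a]"
    using aut_child[OF g d cantor_prefix_words[OF k]] by blast
  have "bact g \<kappa> n = a" using a Suc by (simp add: bact_def nth_append)
  then show ?case using a Suc by simp
qed

lemma bact_inj:
  assumes g: "tree_aut d g" and d: "d \<ge> 1" and k1: "\<kappa>1 \<in> cantor d" and k2: "\<kappa>2 \<in> cantor d"
    and eq: "bact g \<kappa>1 = bact g \<kappa>2"
  shows "\<kappa>1 = \<kappa>2"
proof
  fix n
  have "g (map \<kappa>1 [0..<Suc n]) = g (map \<kappa>2 [0..<Suc n])"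
    using bact_prefix[OF g d k1, of "Suc n"] bact_prefix[OF g d k2, of "Suc n"] eq by metis
  then have "map \<kappa>1 [0..<Suc n] = map \<kappa>2 [0..<Suc n]"
    using aut_inj[OF g cantor_prefix_words[OF k1] cantor_prefix_words[OF k2]] by blast
  then show "\<kappa>1 n = \<kappa>2 n" by simp
qed



lemma Fgrp_E:
  assumes "\<phi> \<in> Fgrp d"
  obtains n wp wm j where
    "\<forall>k<(n::nat). wp k \<in> words d \<and> wm k \<in> words d"
    "\<forall>k<n. \<forall>l<n. k \<noteq> l \<longrightarrow> cone d (wp k) \<inter> cone d (wp l) = {}"
    "\<forall>k<n. \<forall>l<n. k \<noteq> l \<longrightarrow> cone d (wm k) \<inter> cone d (wm l) = {}"
    "(\<Union>k<n. cone d (wp k)) = cantor d"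
    "(\<Union>k<n. cone d (wm k)) = cantor d"
    "bij_betw j {..<n} {..<n}"
    "\<forall>k<n. \<forall>\<kappa>\<in>cantor d. \<phi> (hw (wp k) \<kappa>) = hw (wm (j k)) \<kappa>"
    "\<forall>\<kappa>. \<kappa> \<notin> cantor d \<longrightarrow> \<phi> \<kappa> = \<kappa>"
proof -
  from assms obtain n wp wm j gs where V: "V_data d {id} \<phi> n wp wm j gs"
    by (auto simp: Fgrp_def Vgrp_def)
  then have "\<forall>k<n. gs k = id" by (simp add: V_data_def)
  then have e: "\<forall>k<n. \<forall>\<kappa>\<in>cantor d. \<phi> (hw (wp k) \<kappa>) = hw (wm (j k)) \<kappa>"
    using V by (simp add: V_data_def)
  have w: "\<forall>k<n. wp k \<in> words d \<and> wm k \<in> words d" using V by (simp add: V_data_def)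
  show ?thesis
    apply (rule that[OF w _ _ _ _ _ e])
    using V unfolding V_data_def apply -
    apply (elim conjE; assumption)+
    done
qed

lemma F_out: assumes "\<phi> \<in> Fgrp d" "x \<notin> cantor d" shows "\<phi> x = x"
  using assms(1)
proof (rule Fgrp_E)
  assume "\<forall>\<kappa>. \<kappa> \<notin> cantor d \<longrightarrow> \<phi> \<kappa> = \<kappa>"
  then show ?thesis using assms(2) by simp
qed

lemma F_lex: "\<phi> \<in> Fgrp d \<Longrightarrow> \<kappa> \<in> cantor d \<Longrightarrow> \<mu> \<in> cantor d \<Longrightarrow> lex_less \<kappa> \<mu> \<Longrightarrow> lex_less (\<phi> \<kappa>) (\<phi> \<mu>)"
  by (simp add: Fgrp_def)

lemma in_cones:
  assumes "(\<Union>k<n. cone d (wp k)) = cantor d" "x \<in> cantor d"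
  obtains k where "k < n" "x \<in> cone d (wp k)"
proof -
  have "x \<in> (\<Union>k<n. cone d (wp k))" using assms by simp
  then show ?thesis using that by auto
qed

lemma F_cantor:
  assumes "\<phi> \<in> Fgrp d" "x \<in> cantor d"
  shows "\<phi> x \<in> cantor d"
  using assms(1)
proof (rule Fgrp_E)
  fix n :: nat and wp wm :: "nat \<Rightarrow> nat list" and j :: "nat \<Rightarrow> nat"
  assume w: "\<forall>k<n. wp k \<in> words d \<and> wm k \<in> words d"
    and u: "(\<Union>k<n. cone d (wp k)) = cantor d" and b: "bij_betw j {..<n} {..<n}"
    and e: "\<forall>k<n. \<forall>\<kappa>\<in>cantor d. \<phi> (hw (wp k) \<kappa>) = hw (wm (j k)) \<kappa>"
  obtain k where k: "k < n" "x \<in> cone d (wp k)" using in_cones[OF u assms(2)] by blast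
  have jk: "j k < n" using b k(1) by (meson bij_betwE lessThan_iff)
  have s: "sh (length (wp k)) x \<in> cantor d" using k cone_cantor sh_cantor by metis
  have "\<phi> x = hw (wm (j k)) (sh (length (wp k)) x)"
    using e k s cone_decomp[OF k(2)] by metis
  then show ?thesis using hw_cantor w jk s by simp
qed

lemma F_inj:
  assumes "\<phi> \<in> Fgrp d"
  shows "inj \<phi>"
  using assms(1)
proof (rule Fgrp_E)
  fix n :: nat and wp wm :: "nat \<Rightarrow> nat list" and j :: "nat \<Rightarrow> nat"
  assume w: "\<forall>k<n. wp k \<in> words d \<and> wm k \<in> words d"
    and dm: "\<forall>k<n. \<forall>l<n. k \<noteq> l \<longrightarrow> cone d (wm k) \<inter> cone d (wm l) = {}"
    and u: "(\<Union>k<n. cone d (wp k)) = cantor d" and b: "bij_betw j {..<n} {..<n}"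
    and e: "\<forall>k<n. \<forall>\<kappa>\<in>cantor d. \<phi> (hw (wp k) \<kappa>) = hw (wm (j k)) \<kappa>"
  have main: "x1 = x2" if x1: "x1 \<in> cantor d" and x2: "x2 \<in> cantor d" and eq: "\<phi> x1 = \<phi> x2" for x1 x2
  proof -
    obtain k1 where k1: "k1 < n" "x1 \<in> cone d (wp k1)" using in_cones[OF u x1] by blast
    obtain k2 where k2: "k2 < n" "x2 \<in> cone d (wp k2)" using in_cones[OF u x2] by blast
    have jk1: "j k1 < n" using b k1(1) by (meson bij_betwE lessThan_iff)
    have jk2: "j k2 < n" using b k2(1) by (meson bij_betwE lessThan_iff)
    define s1 where "s1 = sh (length (wp k1)) x1"
    define s2 where "s2 = sh (length (wp k2)) x2"
    have s1: "s1 \<in> cantor d" using k1 cone_cantor sh_cantor s1_def by metis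
    have s2: "s2 \<in> cantor d" using k2 cone_cantor sh_cantor s2_def by metis
    have f1: "\<phi> x1 = hw (wm (j k1)) s1" using e k1 s1 cone_decomp[OF k1(2)] s1_def by metis
    have f2: "\<phi> x2 = hw (wm (j k2)) s2" using e k2 s2 cone_decomp[OF k2(2)] s2_def by metis
    have c1: "\<phi> x1 \<in> cone d (wm (j k1))" using f1 hw_cone w jk1 s1 by simp
    have c2: "\<phi> x1 \<in> cone d (wm (j k2))" using f2 eq hw_cone w jk2 s2 by simp
    have "j k1 = j k2"
    proof (rule ccontr)
      assume "j k1 \<noteq> j k2"
      then have "cone d (wm (j k1)) \<inter> cone d (wm (j k2)) = {}" using dm jk1 jk2 by simp
      then show False using c1 c2 by auto
    qed
    then have kk: "k1 = k2" using b k1(1) k2(1) by (auto simp: bij_betw_def inj_on_def)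
    then have "s1 = s2" using f1 f2 eq hw_inj by metis
    then show ?thesis using cone_decomp[OF k1(2)] cone_decomp[OF k2(2)] kk s1_def s2_def by metis
  qed
  show "inj \<phi>"
  proof (rule injI)
    fix x1 x2 assume eq: "\<phi> x1 = \<phi> x2"
    show "x1 = x2"
    proof (cases "x1 \<in> cantor d"; cases "x2 \<in> cantor d")
      assume "x1 \<in> cantor d" "x2 \<in> cantor d" then show ?thesis using main eq by blast
    next
      assume "x1 \<in> cantor d" "x2 \<notin> cantor d"
      then show ?thesis using F_cantor[OF assms] F_out[OF assms] eq by metis
    next
      assume "x1 \<notin> cantor d" "x2 \<in> cantor d"
      then show ?thesis using F_cantor[OF assms] F_out[OF assms] eq by metis
    next
      assume "x1 \<notin> cantor d" "x2 \<notin> cantor d"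
      then show ?thesis using F_out[OF assms] eq by metis
    qed
  qed
qed

lemma F_surj:
  assumes "\<phi> \<in> Fgrp d"
  shows "surj \<phi>"
  using assms(1)
proof (rule Fgrp_E)
  fix n :: nat and wp wm :: "nat \<Rightarrow> nat list" and j :: "nat \<Rightarrow> nat"
  assume w: "\<forall>k<n. wp k \<in> words d \<and> wm k \<in> words d"
    and u: "(\<Union>k<n. cone d (wm k)) = cantor d" and b: "bij_betw j {..<n} {..<n}"
    and e: "\<forall>k<n. \<forall>\<kappa>\<in>cantor d. \<phi> (hw (wp k) \<kappa>) = hw (wm (j k)) \<kappa>"
  show "surj \<phi>"
  proof -
    have "\<exists>x. \<phi> x = y" for y
    proof (cases "y \<in> cantor d")
      case True
      obtain l where l: "l < n" "y \<in> cone d (wm l)" using in_cones[OF u True] by blast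
      obtain k where k: "k < n" "j k = l" using b l(1) unfolding bij_betw_def by (metis imageE lessThan_iff)
      define s where "s = sh (length (wm l)) y"
      have s: "s \<in> cantor d" using l cone_cantor sh_cantor s_def by metis
      have "\<phi> (hw (wp k) s) = y" using e k s cone_decomp[OF l(2)] s_def by metis
      then show ?thesis by blast
    next
      case False
      then show ?thesis using F_out[OF assms] by blast
    qed
    then show ?thesis by (metis surjI)
  qed
qed

lemma F_bij: "\<phi> \<in> Fgrp d \<Longrightarrow> bij \<phi>"
  by (simp add: bij_def F_inj F_surj)



lemma lex_head_le: "lex_less x y \<Longrightarrow> x 0 \<le> y 0"
  unfolding lex_less_def by (metis gr0I le_eq_less_or_eq)

lemma lex_head_lt: "x 0 < y 0 \<Longrightarrow> lex_less x y"
  unfolding lex_less_def by (rule exI[of _ 0]) simp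

lemma lex_tail: "lex_less x y \<Longrightarrow> x 0 = y 0 \<Longrightarrow> lex_less (sh 1 x) (sh 1 y)"
  unfolding lex_less_def sh_def
proof -
  assume "\<exists>n. (\<forall>m<n. x m = y m) \<and> x n < y n" and h: "x 0 = y 0"
  then obtain n where n: "\<forall>m<n. x m = y m" "x n < y n" by blast
  then have "n \<noteq> 0" using h by (metis less_irrefl)
  then obtain n' where "n = Suc n'" using not0_implies_Suc by blast
  then show "\<exists>n. (\<forall>m<n. x (m + 1) = y (m + 1)) \<and> x (n + 1) < y (n + 1)"
    using n by (intro exI[of _ n']) auto
qed

lemma lex_hw: "lex_less a b \<Longrightarrow> lex_less (hw w a) (hw w b)"
  unfolding lex_less_def
proof -
  assume "\<exists>n. (\<forall>m<n. a m = b m) \<and> a n < b n"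
  then obtain n where n: "\<forall>m<n. a m = b m" "a n < b n" by blast
  show "\<exists>n. (\<forall>m<n. hw w a m = hw w b m) \<and> hw w a n < hw w b n"
    apply (rule exI[of _ "n + length w"])
    using n by (auto simp: hw_def)
qed

lemma lex_second: "x 0 = y 0 \<Longrightarrow> x 1 < y 1 \<Longrightarrow> lex_less x y"
  unfolding lex_less_def
  by (rule exI[of _ 1]) (auto simp: less_Suc_eq)

lemma cone1: "x \<in> cone d [c] \<longleftrightarrow> x \<in> cantor d \<and> x 0 = c"
  by (auto simp: cone_def)

lemma sh1_hw1[simp]: "sh (Suc 0) (hw [c] a) = a"
  by (simp add: sh_def hw_def)

lemma hw1_0[simp]: "hw [c] a 0 = c"
  by (simp add: hw_def)

lemma hw1_sh1: "x 0 = c \<Longrightarrow> hw [c] (sh (Suc 0) x) = x"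
  by (auto simp: hw_def sh_def fun_eq_iff)

lemma sh_sh: "sh m (sh k x) = sh (k + m) x"
  by (simp add: sh_def add.commute add.left_commute)

lemma cone_Cons: "x \<in> cone d (c # w) \<longleftrightarrow> x \<in> cone d [c] \<and> sh 1 x \<in> cone d w"
  by (auto simp: cone_def sh_def cantor_def nth_Cons split: nat.splits)

lemma cone_Cons_disj:
  assumes "cone d a \<inter> cone d b = {}" shows "cone d (c # a) \<inter> cone d (c # b) = {}"
  using assms cone_Cons by blast

lemma cone_hd_disj: "a \<noteq> b \<Longrightarrow> cone d (a # u) \<inter> cone d (b # v) = {}"
  by (auto simp: cone_def)

definition loc :: "nat \<Rightarrow> nat list \<Rightarrow> ((nat \<Rightarrow> nat) \<Rightarrow> (nat \<Rightarrow> nat)) \<Rightarrow> (nat \<Rightarrow> nat) \<Rightarrow> (nat \<Rightarrow> nat)" where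
  "loc d w \<theta> x = (if x \<in> cone d w then hw w (\<theta> (sh (length w) x)) else x)"

lemma loc_Nil: "(\<And>x. x \<notin> cantor d \<Longrightarrow> \<theta> x = x) \<Longrightarrow> loc d [] \<theta> = \<theta>"
  by (auto simp: loc_def fun_eq_iff)

lemma loc_Cons: "loc d (c # w) \<theta> = loc d [c] (loc d w \<theta>)"
proof
  fix x
  show "loc d (c # w) \<theta> x = loc d [c] (loc d w \<theta>) x"
  proof (cases "x \<in> cone d (c # w)")
    case True
    then have x1: "x \<in> cone d [c]" and x2: "sh 1 x \<in> cone d w" using cone_Cons by blast+
    have "loc d (c # w) \<theta> x = hw (c # w) (\<theta> (sh (Suc (length w)) x))"
      using True by (simp add: loc_def)
    moreover have "loc d [c] (loc d w \<theta>) x = hw [c] (hw w (\<theta> (sh (length w) (sh 1 x))))"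
      using x1 x2 by (simp add: loc_def)
    ultimately show ?thesis by (simp add: hw_append sh_sh)
  next
    case False
    show ?thesis
    proof (cases "x \<in> cone d [c]")
      case True
      then have "sh 1 x \<notin> cone d w" using False cone_Cons by blast
      then have "loc d [c] (loc d w \<theta>) x = hw [c] (sh 1 x)" using True by (simp add: loc_def)
      also have "... = x" using True by (simp add: hw1_sh1 cone1)
      finally show ?thesis using False by (simp add: loc_def)
    next
      case F2: False
      then show ?thesis using False by (simp add: loc_def)
    qed
  qed
qed



definition lt :: "nat \<Rightarrow> nat \<Rightarrow> nat" where
  "lt c i = (if i + 1 < c then i + 1 else i + 2)"

definition ext :: "nat \<Rightarrow> nat \<Rightarrow> (nat \<Rightarrow> nat list) \<Rightarrow> nat \<Rightarrow> nat list" where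
  "ext c n a k = (if k < n then c # a k else [lt c (k - n)])"

lemma lt_range: "c \<in> {1..d} \<Longrightarrow> i < d - 1 \<Longrightarrow> lt c i \<in> {1..d} \<and> lt c i \<noteq> c"
  by (auto simp: lt_def)

lemma lt_inj: "lt c i = lt c i' \<Longrightarrow> i = i'"
  by (auto simp: lt_def split: if_splits)

lemma lt_surj: "a \<in> {1..d} \<Longrightarrow> a \<noteq> c \<Longrightarrow> c \<in> {1..d} \<Longrightarrow> \<exists>i<d-1. lt c i = a"
proof -
  assume a: "a \<in> {1..d}" "a \<noteq> c" "c \<in> {1..d}"
  show ?thesis
  proof (cases "a < c")
    case True
    then show ?thesis using a by (intro exI[of _ "a - 1"]) (auto simp: lt_def)
  next
    case False
    then show ?thesis using a by (intro exI[of _ "a - 2"]) (auto simp: lt_def)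
  qed
qed

lemma ext_words:
  assumes "\<forall>k<n. a k \<in> words d" "c \<in> {1..d}" "k < n + (d - 1)"
  shows "ext c n a k \<in> words d"
proof (cases "k < n")
  case True then show ?thesis using assms by (simp add: ext_def)
next
  case False
  then have "lt c (k - n) \<in> {1..d}" using lt_range[OF assms(2), of "k - n"] assms(3) by simp
  then show ?thesis using False by (simp add: ext_def words_def)
qed

lemma ext_disj:
  assumes D: "\<forall>k<n. \<forall>l<n. k \<noteq> l \<longrightarrow> cone d (a k) \<inter> cone d (a l) = {}" and c: "c \<in> {1..d}"
  shows "\<forall>k<n+(d-1). \<forall>l<n+(d-1). k \<noteq> l \<longrightarrow> cone d (ext c n a k) \<inter> cone d (ext c n a l) = {}"
proof (intro allI impI)
  fix k l assume k: "k < n + (d - 1)" and l: "l < n + (d - 1)" and kl: "k \<noteq> l"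
  show "cone d (ext c n a k) \<inter> cone d (ext c n a l) = {}"
  proof (cases "k < n")
    case kn: True
    show ?thesis
    proof (cases "l < n")
      case True
      then show ?thesis using kn D kl cone_Cons_disj by (simp add: ext_def)
    next
      case False
      then have "lt c (l - n) \<noteq> c" using lt_range[OF c, of "l - n"] l by simp
      then show ?thesis using kn False cone_hd_disj by (simp add: ext_def)
    qed
  next
    case kn: False
    have ne: "lt c (k - n) \<noteq> c" using lt_range[OF c, of "k - n"] k kn by simp
    show ?thesis
    proof (cases "l < n")
      case True
      then show ?thesis using kn ne cone_hd_disj by (simp add: ext_def)
    next
      case False
      have "k - n \<noteq> l - n" using kn False kl by arith
      then have "lt c (k - n) \<noteq> lt c (l - n)" using lt_inj by blast
      then show ?thesis using kn False cone_hd_disj by (simp add: ext_def)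
    qed
  qed
qed

lemma ext_union:
  assumes U: "(\<Union>k<n. cone d (a k)) = cantor d" and c: "c \<in> {1..d}"
  shows "(\<Union>k<n+(d-1). cone d (ext c n a k)) = cantor d"
proof
  show "(\<Union>k<n+(d-1). cone d (ext c n a k)) \<subseteq> cantor d"
    by (auto dest: cone_cantor)
next
  show "cantor d \<subseteq> (\<Union>k<n+(d-1). cone d (ext c n a k))"
  proof
    fix x assume x: "x \<in> cantor d"
    show "x \<in> (\<Union>k<n+(d-1). cone d (ext c n a k))"
    proof (cases "x 0 = c")
      case True
      have "sh 1 x \<in> cantor d" using x sh_cantor by blast
      then obtain k where k: "k < n" "sh 1 x \<in> cone d (a k)" using in_cones[OF U] by metis
      have "x \<in> cone d [c]" using x True cone1 by blast
      then have "x \<in> cone d (c # a k)" using k cone_Cons by blast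
      moreover have "ext c n a k = c # a k" using k by (simp add: ext_def)
      ultimately show ?thesis using k(1) by (metis (no_types, lifting) UN_iff lessThan_iff trans_less_add1)
    next
      case False
      have "x 0 \<in> {1..d}" using x by (simp add: cantor_def)
      then obtain i where i: "i < d - 1" "lt c i = x 0" using lt_surj[OF _ False c] by blast
      have "x \<in> cone d [lt c i]" using x i cone1 by simp
      moreover have "ext c n a (n + i) = [lt c i]" by (simp add: ext_def)
      moreover have "n + i < n + (d - 1)" using i by simp
      ultimately show ?thesis by (metis (no_types, lifting) UN_iff lessThan_iff)
    qed
  qed
qed


lemma loc1_in: "x \<in> cantor d \<Longrightarrow> x 0 = c \<Longrightarrow> loc d [c] \<theta> x = hw [c] (\<theta> (sh 1 x))"
  by (simp add: loc_def cone1)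

lemma loc1_out: "\<not> (x \<in> cantor d \<and> x 0 = c) \<Longrightarrow> loc d [c] \<theta> x = x"
  unfolding loc_def cone1 by auto

lemma j_ext_bij:
  fixes n m :: nat
  assumes b: "bij_betw j {..<n} {..<n}"
  shows "bij_betw (\<lambda>k. if k < n then j k else k) {..<n+m} {..<n+m}"
proof -
  let ?j = "\<lambda>k. if k < n then j k else k"
  have jn: "k < n \<Longrightarrow> j k < n" for k using b by (meson bij_betwE lessThan_iff)
  have inj: "inj_on j {..<n}" using b by (simp add: bij_betw_def)
  have "inj_on ?j {..<n+m}"
  proof (rule inj_onI)
    fix x y assume x: "x \<in> {..<n+m}" and y: "y \<in> {..<n+m}" and e: "?j x = ?j y"
    show "x = y"
    proof (cases "x < n"; cases "y < n")
      assume "x < n" "y < n" then show ?thesis using e inj by (simp add: inj_on_def)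
    next
      assume "x < n" "\<not> y < n" then show ?thesis using e jn[of x] by simp
    next
      assume "\<not> x < n" "y < n" then show ?thesis using e jn[of y] by simp
    next
      assume "\<not> x < n" "\<not> y < n" then show ?thesis using e by simp
    qed
  qed
  moreover have "?j ` {..<n+m} = {..<n+m}"
  proof (rule set_eqI)
    fix y
    have a: "y \<in> {..<n+m}" if hy: "y \<in> ?j ` {..<n+m}"
    proof -
      obtain x where x: "y = ?j x" "x \<in> {..<n+m}" using hy by (rule imageE)
      show ?thesis
      proof (cases "x < n")
        case True then show ?thesis using x jn[OF True] by simp
      next
        case False then show ?thesis using x by simp
      qed
    qed
    have b2: "y \<in> ?j ` {..<n+m}" if y: "y \<in> {..<n+m}"
    proof (cases "y < n")
      case True
      have "y \<in> j ` {..<n}" using b True unfolding bij_betw_def by simp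
      then obtain k where k0: "y = j k" "k \<in> {..<n}" by (rule imageE)
      then have k: "k < n" by simp
      then have e1: "y = ?j k" using k0 by simp
      have "k \<in> {..<n+m}" using k by simp
      then show ?thesis using e1 by (rule rev_image_eqI)
    next
      case False
      then have e1: "y = ?j y" by simp
      show ?thesis using y e1 by (rule rev_image_eqI)
    qed
    show "y \<in> ?j ` {..<n+m} \<longleftrightarrow> y \<in> {..<n+m}" using a b2 by blast
  qed
  ultimately show ?thesis by (simp add: bij_betw_def)
qed

lemma loc1_F:
  assumes d: "d \<ge> 1" and c: "c \<in> {1..d}" and th: "\<theta> \<in> Fgrp d"
  shows "loc d [c] \<theta> \<in> Fgrp d"
  using th
proof (rule Fgrp_E)
  fix n :: nat and wp wm :: "nat \<Rightarrow> nat list" and j :: "nat \<Rightarrow> nat"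
  assume w: "\<forall>k<n. wp k \<in> words d \<and> wm k \<in> words d"
    and dp: "\<forall>k<n. \<forall>l<n. k \<noteq> l \<longrightarrow> cone d (wp k) \<inter> cone d (wp l) = {}"
    and dm: "\<forall>k<n. \<forall>l<n. k \<noteq> l \<longrightarrow> cone d (wm k) \<inter> cone d (wm l) = {}"
    and up: "(\<Union>k<n. cone d (wp k)) = cantor d"
    and um: "(\<Union>k<n. cone d (wm k)) = cantor d"
    and b: "bij_betw j {..<n} {..<n}"
    and e: "\<forall>k<n. \<forall>\<kappa>\<in>cantor d. \<theta> (hw (wp k) \<kappa>) = hw (wm (j k)) \<kappa>"
  let ?\<phi> = "loc d [c] \<theta>"
  let ?j = "\<lambda>k. if k < n then j k else k"
  have jn: "k < n \<Longrightarrow> j k < n" for k using b by (meson bij_betwE lessThan_iff)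
  have eq: "\<forall>k<n+(d-1). \<forall>\<kappa>\<in>cantor d. ?\<phi> (hw (ext c n wp k) \<kappa>) = hw (ext c n wm (?j k)) (bact (id) \<kappa>)"
  proof (intro allI impI ballI)
    fix k \<kappa> assume k: "k < n + (d - 1)" and ka: "\<kappa> \<in> cantor d"
    show "?\<phi> (hw (ext c n wp k) \<kappa>) = hw (ext c n wm (?j k)) (bact id \<kappa>)"
    proof (cases "k < n")
      case True
      have hk: "hw (ext c n wp k) \<kappa> = hw [c] (hw (wp k) \<kappa>)" using True by (simp add: ext_def hw_append)
      have hc: "hw [c] (hw (wp k) \<kappa>) \<in> cantor d"
        using hw_cantor[OF _ hw_cantor[OF _ ka]] w True c by (simp add: words_def)
      have "?\<phi> (hw (ext c n wp k) \<kappa>) = hw [c] (\<theta> (hw (wp k) \<kappa>))"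
        using hk hc loc1_in[of "hw [c] (hw (wp k) \<kappa>)" d c \<theta>] by simp
      also have "... = hw [c] (hw (wm (j k)) \<kappa>)" using e True ka by simp
      also have "... = hw (ext c n wm (?j k)) (bact id \<kappa>)"
        using True jn[OF True] by (simp add: ext_def hw_append)
      finally show ?thesis .
    next
      case False
      have ne: "lt c (k - n) \<noteq> c" using lt_range[OF c, of "k - n"] k False by simp
      have "?\<phi> (hw (ext c n wp k) \<kappa>) = hw (ext c n wp k) \<kappa>"
        using False ne by (intro loc1_out) (simp add: ext_def)
      then show ?thesis using False by (simp add: ext_def)
    qed
  qed
  have outc: "\<forall>\<kappa>. \<kappa> \<notin> cantor d \<longrightarrow> ?\<phi> \<kappa> = \<kappa>" using loc1_out by blast
  have V: "V_data d {id} ?\<phi> (n + (d - 1)) (ext c n wp) (ext c n wm) ?j (\<lambda>_. id)"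
    unfolding V_data_def
    using ext_words[of n wp d c] ext_words[of n wm d c] w c
      ext_disj[OF dp c] ext_disj[OF dm c] ext_union[OF up c] ext_union[OF um c]
      j_ext_bij[OF b, of "d - 1"] eq outc
    by auto
  then have inV: "?\<phi> \<in> Vgrp d {id}" unfolding Vgrp_def by blast
  have lex: "lex_less (?\<phi> \<kappa>) (?\<phi> \<mu>)"
    if ka: "\<kappa> \<in> cantor d" and mu: "\<mu> \<in> cantor d" and l: "lex_less \<kappa> \<mu>" for \<kappa> \<mu>
  proof (cases "\<kappa> 0 = c"; cases "\<mu> 0 = c")
    assume a1: "\<kappa> 0 = c" and a2: "\<mu> 0 = c"
    have "lex_less (sh 1 \<kappa>) (sh 1 \<mu>)" using lex_tail l a1 a2 by simp
    then have "lex_less (\<theta> (sh 1 \<kappa>)) (\<theta> (sh 1 \<mu>))"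
      using F_lex[OF th sh_cantor[OF ka] sh_cantor[OF mu]] by blast
    then show ?thesis using loc1_in[OF ka a1] loc1_in[OF mu a2] lex_hw by simp
  next
    assume a1: "\<kappa> 0 = c" and a2: "\<mu> 0 \<noteq> c"
    have "\<kappa> 0 < \<mu> 0" using lex_head_le[OF l] a1 a2 by simp
    then show ?thesis using loc1_in[OF ka a1] loc1_out[of \<mu> d c] a2 a1 lex_head_lt by simp
  next
    assume a1: "\<kappa> 0 \<noteq> c" and a2: "\<mu> 0 = c"
    have "\<kappa> 0 < \<mu> 0" using lex_head_le[OF l] a1 a2 by simp
    then show ?thesis using loc1_in[OF mu a2] loc1_out[of \<kappa> d c] a2 a1 lex_head_lt by simp
  next
    assume a1: "\<kappa> 0 \<noteq> c" and a2: "\<mu> 0 \<noteq> c"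
    then show ?thesis using loc1_out[of \<kappa> d c] loc1_out[of \<mu> d c] l by simp
  qed
  show ?thesis using inV lex unfolding Fgrp_def by blast
qed



lemma loc_F:
  assumes d: "d \<ge> 1"
  shows "w \<in> words d \<Longrightarrow> \<theta> \<in> Fgrp d \<Longrightarrow> loc d w \<theta> \<in> Fgrp d"
proof (induction w)
  case Nil
  have "loc d [] \<theta> = \<theta>" using loc_Nil F_out[OF Nil(2)] by metis
  then show ?case using Nil by simp
next
  case (Cons c w)
  have "loc d w \<theta> \<in> Fgrp d" using Cons by simp
  moreover have "c \<in> {1..d}" using Cons(2) by simp
  ultimately show ?case using loc1_F[OF d] loc_Cons by metis
qed

definition th :: "nat \<Rightarrow> (nat \<Rightarrow> nat) \<Rightarrow> (nat \<Rightarrow> nat)" where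
  "th d x = (if x \<notin> cantor d then x else if x 0 < d then hw [1] x
     else if x 1 = 1 then hw [1, d] (sh 2 x) else sh 1 x)"

lemma cone2: "x \<in> cone d [a, b] \<longleftrightarrow> x \<in> cantor d \<and> x 0 = a \<and> x 1 = b"
  by (auto simp: cone_def less_Suc_eq)

lemma hw2_sh2: "x 0 = a \<Longrightarrow> x 1 = b \<Longrightarrow> hw [a, b] (sh 2 x) = x"
proof
  fix n assume "x 0 = a" "x 1 = b"
  then show "hw [a, b] (sh 2 x) n = x n"
    by (cases n; cases "n - 1") (auto simp: hw_def sh_def)
qed

lemma sh2_hw2[simp]: "sh 2 (hw [a, b] x) = x"
  by (auto simp: hw_def sh_def fun_eq_iff)

lemma hw2_0[simp]: "hw [a, b] x 0 = a" by (simp add: hw_def)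
lemma hw2_1[simp]: "hw [a, b] x (Suc 0) = b" by (simp add: hw_def)
lemma hw1_1[simp]: "hw [a] x (Suc 0) = x 0" by (simp add: hw_def)

lemma cantor_val: "x \<in> cantor d \<Longrightarrow> x k \<in> {1..d}"
  by (simp add: cantor_def)


definition wpT :: "nat \<Rightarrow> nat \<Rightarrow> nat list" where
  "wpT d k = (if k < d - 1 then [k + 1] else [d, k + 2 - d])"

definition wmT :: "nat \<Rightarrow> nat \<Rightarrow> nat list" where
  "wmT d k = (if k < d then [1, k + 1] else [k + 2 - d])"

lemma th_in: "x \<in> cantor d \<Longrightarrow> x 0 < d \<Longrightarrow> th d x = hw [1] x"
  by (simp add: th_def)
lemma th_B: "x \<in> cantor d \<Longrightarrow> x 0 = d \<Longrightarrow> x 1 = 1 \<Longrightarrow> th d x = hw [1, d] (sh 2 x)"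
  by (simp add: th_def)
lemma th_C: "x \<in> cantor d \<Longrightarrow> x 0 = d \<Longrightarrow> x 1 \<noteq> 1 \<Longrightarrow> th d x = sh 1 x"
  by (simp add: th_def)

lemma th_words:
  assumes d: "d \<ge> 2" and k: "k < d + (d - 1)"
  shows "wpT d k \<in> words d" "wmT d k \<in> words d"
  using d k by (auto simp: wpT_def wmT_def words_def)

lemma th_eq:
  assumes d: "d \<ge> 2" and k: "k < d + (d - 1)" and ka: "\<kappa> \<in> cantor d"
  shows "th d (hw (wpT d k) \<kappa>) = hw (wmT d k) \<kappa>"
proof -
  have xc: "hw (wpT d k) \<kappa> \<in> cantor d" using hw_cantor[OF th_words(1)[OF d k] ka] .
  consider (A) "k < d - 1" | (B) "k = d - 1" | (C) "k \<ge> d" by linarith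
  then show ?thesis
  proof cases
    case A
    then have "wpT d k = [k + 1]" "wmT d k = [1, k + 1]" by (auto simp: wpT_def wmT_def)
    then show ?thesis using A xc th_in[OF xc] by (simp add: hw_append)
  next
    case B
    then have w: "wpT d k = [d, 1]" "wmT d k = [1, d]" using d by (auto simp: wpT_def wmT_def)
    then show ?thesis using th_B[OF xc] by simp
  next
    case C
    then have w: "wpT d k = [d, k + 2 - d]" "wmT d k = [k + 2 - d]" using d by (auto simp: wpT_def wmT_def)
    have "k + 2 - d \<noteq> 1" using C by simp
    then have "th d (hw (wpT d k) \<kappa>) = sh 1 (hw (wpT d k) \<kappa>)" using th_C[OF xc] w by simp
    also have "... = hw (wmT d k) \<kappa>" using w by (simp add: sh_def hw_def fun_eq_iff)
    finally show ?thesis .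
  qed
qed


lemma cone_single_disj: "a \<noteq> b \<Longrightarrow> cone d [a] \<inter> cone d [b] = {}"
  using cone_hd_disj[of a b d "[]" "[]"] .

lemma th_disj_p:
  assumes d: "d \<ge> 2"
  shows "\<forall>k<d+(d-1). \<forall>l<d+(d-1). k \<noteq> l \<longrightarrow> cone d (wpT d k) \<inter> cone d (wpT d l) = {}"
proof (intro allI impI)
  fix k l assume k: "k < d + (d - 1)" and l: "l < d + (d - 1)" and kl: "k \<noteq> l"
  show "cone d (wpT d k) \<inter> cone d (wpT d l) = {}"
  proof (cases "k < d - 1"; cases "l < d - 1")
    assume "k < d - 1" "l < d - 1"
    then show ?thesis using kl cone_hd_disj by (simp add: wpT_def)
  next
    assume "k < d - 1" "\<not> l < d - 1"
    then show ?thesis using cone_hd_disj by (simp add: wpT_def)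
  next
    assume "\<not> k < d - 1" "l < d - 1"
    then show ?thesis using cone_hd_disj by (simp add: wpT_def)
  next
    assume a: "\<not> k < d - 1" "\<not> l < d - 1"
    then have "k + 2 - d \<noteq> l + 2 - d" using kl d by arith
    then show ?thesis using a cone_Cons_disj cone_single_disj by (simp add: wpT_def)
  qed
qed

lemma th_disj_m:
  assumes d: "d \<ge> 2"
  shows "\<forall>k<d+(d-1). \<forall>l<d+(d-1). k \<noteq> l \<longrightarrow> cone d (wmT d k) \<inter> cone d (wmT d l) = {}"
proof (intro allI impI)
  fix k l assume k: "k < d + (d - 1)" and l: "l < d + (d - 1)" and kl: "k \<noteq> l"
  show "cone d (wmT d k) \<inter> cone d (wmT d l) = {}"
  proof (cases "k < d"; cases "l < d")
    assume "k < d" "l < d"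
    then show ?thesis using kl cone_Cons_disj cone_single_disj by (simp add: wmT_def)
  next
    assume "k < d" "\<not> l < d"
    then show ?thesis using cone_hd_disj by (simp add: wmT_def)
  next
    assume "\<not> k < d" "l < d"
    then show ?thesis using cone_hd_disj by (simp add: wmT_def)
  next
    assume a: "\<not> k < d" "\<not> l < d"
    then have "k + 2 - d \<noteq> l + 2 - d" using kl d by arith
    then show ?thesis using a cone_single_disj by (simp add: wmT_def)
  qed
qed

lemma in_union: "k < n \<Longrightarrow> x \<in> cone d (a k) \<Longrightarrow> x \<in> (\<Union>k<n. cone d (a k))"
  by blast

lemma th_union_p:
  assumes d: "d \<ge> 2"
  shows "(\<Union>k<d+(d-1). cone d (wpT d k)) = cantor d"
proof
  show "(\<Union>k<d+(d-1). cone d (wpT d k)) \<subseteq> cantor d" by (auto dest: cone_cantor)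
next
  show "cantor d \<subseteq> (\<Union>k<d+(d-1). cone d (wpT d k))"
  proof
    fix x assume x: "x \<in> cantor d"
    have x0: "x 0 \<in> {1..d}" and x1: "x 1 \<in> {1..d}" using x by (simp_all add: cantor_def)
    show "x \<in> (\<Union>k<d+(d-1). cone d (wpT d k))"
    proof (cases "x 0 < d")
      case True
      then have "wpT d (x 0 - 1) = [x 0]" using x0 by (auto simp: wpT_def)
      then have "x \<in> cone d (wpT d (x 0 - 1))" using x cone1 by simp
      moreover have "x 0 - 1 < d + (d - 1)" using True by simp
      ultimately show ?thesis by (rule in_union[rotated])
    next
      case False
      then have "x 0 = d" using x0 by simp
      moreover have "wpT d (d + x 1 - 2) = [d, x 1]" using x1 d by (auto simp: wpT_def)
      ultimately have "x \<in> cone d (wpT d (d + x 1 - 2))" using x cone2 by simp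
      moreover have "d + x 1 - 2 < d + (d - 1)" using x1 d by (simp only: atLeastAtMost_iff) linarith
      ultimately show ?thesis by (rule in_union[rotated])
    qed
  qed
qed

lemma th_union_m:
  assumes d: "d \<ge> 2"
  shows "(\<Union>k<d+(d-1). cone d (wmT d k)) = cantor d"
proof
  show "(\<Union>k<d+(d-1). cone d (wmT d k)) \<subseteq> cantor d" by (auto dest: cone_cantor)
next
  show "cantor d \<subseteq> (\<Union>k<d+(d-1). cone d (wmT d k))"
  proof
    fix x assume x: "x \<in> cantor d"
    have x0: "x 0 \<in> {1..d}" and x1: "x 1 \<in> {1..d}" using x by (simp_all add: cantor_def)
    show "x \<in> (\<Union>k<d+(d-1). cone d (wmT d k))"
    proof (cases "x 0 = 1")
      case True
      have "wmT d (x 1 - 1) = [1, x 1]" using x1 by (auto simp: wmT_def)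
      then have "x \<in> cone d (wmT d (x 1 - 1))" using x cone2 True by simp
      moreover have "x 1 - 1 < d + (d - 1)" using x1 by (simp only: atLeastAtMost_iff) linarith
      ultimately show ?thesis by (rule in_union[rotated])
    next
      case False
      have "wmT d (d + x 0 - 2) = [x 0]" using x0 False d by (auto simp: wmT_def)
      then have "x \<in> cone d (wmT d (d + x 0 - 2))" using x cone1 by simp
      moreover have "d + x 0 - 2 < d + (d - 1)" using x0 False d by (simp only: atLeastAtMost_iff) linarith
      ultimately show ?thesis by (rule in_union[rotated])
    qed
  qed
qed


lemma th_lex:
  assumes d: "d \<ge> 2" and ka: "\<kappa> \<in> cantor d" and mu: "\<mu> \<in> cantor d" and l: "lex_less \<kappa> \<mu>"
  shows "lex_less (th d \<kappa>) (th d \<mu>)"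
proof -
  have k0: "\<kappa> 0 \<in> {1..d}" and k1: "\<kappa> 1 \<in> {1..d}" using ka by (simp_all add: cantor_def)
  have m0: "\<mu> 0 \<in> {1..d}" and m1: "\<mu> 1 \<in> {1..d}" using mu by (simp_all add: cantor_def)
  have hl: "\<kappa> 0 \<le> \<mu> 0" using lex_head_le[OF l] .
  consider (A) "\<kappa> 0 < d" | (B) "\<kappa> 0 = d" "\<kappa> 1 = 1" | (C) "\<kappa> 0 = d" "\<kappa> 1 \<noteq> 1"
    using k0 by force
  then show ?thesis
  proof cases
    case A
    have tk: "th d \<kappa> = hw [1] \<kappa>" using th_in[OF ka A] .
    consider (A') "\<mu> 0 < d" | (B') "\<mu> 0 = d" "\<mu> 1 = 1" | (C') "\<mu> 0 = d" "\<mu> 1 \<noteq> 1"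
      using m0 by force
    then show ?thesis
    proof cases
      case A'
      then show ?thesis using tk th_in[OF mu A'] lex_hw[OF l] by simp
    next
      case B'
      have "th d \<mu> = hw [1, d] (sh 2 \<mu>)" using th_B[OF mu B'(1)] B'(2) by simp
      then show ?thesis using tk A by (intro lex_second) simp_all
    next
      case C'
      have "th d \<mu> = sh 1 \<mu>" using th_C[OF mu C'(1)] C'(2) by simp
      moreover have "1 < \<mu> 1" using m1 C'(2) by simp
      ultimately show ?thesis using tk by (intro lex_head_lt) (simp add: sh_def)
    qed
  next
    case B
    have tk: "th d \<kappa> = hw [1, d] (sh 2 \<kappa>)" using th_B[OF ka B(1)] B(2) by simp
    have m0d: "\<mu> 0 = d" using hl B m0 by simp
    show ?thesis
    proof (cases "\<mu> 1 = 1")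
      case True
      have tm: "th d \<mu> = hw [1, d] (sh 2 \<mu>)" using th_B[OF mu m0d] True by simp
      have l1: "lex_less (sh 1 \<kappa>) (sh 1 \<mu>)" using lex_tail[OF l] B m0d by simp
      have "lex_less (sh 1 (sh 1 \<kappa>)) (sh 1 (sh 1 \<mu>))" using lex_tail[OF l1] B True by (simp add: sh_def)
      moreover have "Suc (Suc 0) = (2::nat)" by simp
      ultimately have "lex_less (sh 2 \<kappa>) (sh 2 \<mu>)" by (simp add: sh_sh del: One_nat_def)
      then show ?thesis using tk tm lex_hw by simp
    next
      case False
      have "th d \<mu> = sh 1 \<mu>" using th_C[OF mu m0d] False by simp
      moreover have "1 < \<mu> 1" using m1 False by simp
      ultimately show ?thesis using tk by (intro lex_head_lt) (simp add: sh_def)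
    qed
  next
    case C
    have tk: "th d \<kappa> = sh 1 \<kappa>" using th_C[OF ka C(1)] C(2) by simp
    have m0d: "\<mu> 0 = d" using hl C m0 by simp
    have l1: "lex_less (sh 1 \<kappa>) (sh 1 \<mu>)" using lex_tail[OF l] C m0d by simp
    have "\<kappa> 1 \<le> \<mu> 1" using lex_head_le[OF l1] by (simp add: sh_def)
    then have "\<mu> 1 \<noteq> 1" using C k1 by simp
    then have "th d \<mu> = sh 1 \<mu>" using th_C[OF mu m0d] by simp
    then show ?thesis using tk l1 by simp
  qed
qed

lemma th_F:
  assumes d: "d \<ge> 2"
  shows "th d \<in> Fgrp d"
proof -
  have V: "V_data d {id} (th d) (d + (d - 1)) (wpT d) (wmT d) id (\<lambda>_. id)"
    unfolding V_data_def
    using th_words[OF d] th_disj_p[OF d] th_disj_m[OF d] th_union_p[OF d] th_union_m[OF d]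
      th_eq[OF d]
    by (auto simp: th_def)
  then have "th d \<in> Vgrp d {id}" unfolding Vgrp_def by blast
  then show ?thesis using th_lex[OF d] unfolding Fgrp_def by blast
qed



lemma cone_append_sub: "cone d (u @ v) \<subseteq> cone d u"
  by (auto simp: cone_def nth_append)

lemma loc_in_cone:
  assumes "\<theta> \<in> Fgrp d" "w \<in> words d" "x \<in> cone d w"
  shows "loc d w \<theta> x \<in> cone d w"
proof -
  have "sh (length w) x \<in> cantor d" using assms(3) cone_cantor sh_cantor by metis
  then have "\<theta> (sh (length w) x) \<in> cantor d" using F_cantor[OF assms(1)] by blast
  then show ?thesis using assms(2,3) hw_cone by (simp add: loc_def)
qed

lemma loc_out: "x \<notin> cone d w \<Longrightarrow> loc d w \<theta> x = x"
  by (simp add: loc_def)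

lemma loc_at: "x \<in> cone d w \<Longrightarrow> loc d w \<theta> x = hw w (\<theta> (sh (length w) x))"
  by (simp add: loc_def)

lemma cone_agree:
  assumes "x \<in> cantor d" "\<forall>i<length w. x i = w ! i"
  shows "x \<in> cone d w"
  using assms by (simp add: cone_def)


theorem mainTheorem10:
  fixes d :: nat and G :: "(nat list \<Rightarrow> nat list) set"
    and f :: "(nat \<Rightarrow> nat) \<Rightarrow> (nat \<Rightarrow> nat)"
  assumes "d \<ge> 2" and "self_similar d G"
    and "f \<in> Vgrp d G" and "f \<noteq> id"
  shows "infinite {\<phi> \<circ> f \<circ> inv \<phi> | \<phi>. \<phi> \<in> Fgrp d}"
proof -
  have d: "d \<ge> 2" using assms(1) .
  have d1: "d \<ge> 1" using d by simp
  have GT: "\<And>g. g \<in> G \<Longrightarrow> tree_aut d g"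
    using assms(2) unfolding self_similar_def aut_subgroup_def by blast
  obtain n wp wm j gs where V: "V_data d G f n wp wm j gs"
    using assms(3) unfolding Vgrp_def by blast
  have Vw: "\<forall>k<n. wp k \<in> words d \<and> wm k \<in> words d \<and> gs k \<in> G"
    and Vu: "(\<Union>k<n. cone d (wp k)) = cantor d"
    and Vb: "bij_betw j {..<n} {..<n}"
    and Ve: "\<forall>k<n. \<forall>\<kappa>\<in>cantor d. f (hw (wp k) \<kappa>) = hw (wm (j k)) (bact (gs k) \<kappa>)"
    and Vo: "\<forall>\<kappa>. \<kappa> \<notin> cantor d \<longrightarrow> f \<kappa> = \<kappa>"
    using V unfolding V_data_def by simp_all
  obtain \<kappa> where fk: "f \<kappa> \<noteq> \<kappa>" using assms(4) by (metis eq_id_iff)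
  have kc: "\<kappa> \<in> cantor d" using fk Vo by blast
  obtain k where k: "k < n" "\<kappa> \<in> cone d (wp k)" using in_cones[OF Vu kc] by blast
  define p where "p = wp k"
  define q where "q = wm (j k)"
  define g where "g = gs k"
  have g: "tree_aut d g" using GT Vw k(1) g_def by blast
  have fform: "f x = hw q (bact g (sh (length p) x))" if x: "x \<in> cone d p" for x
  proof -
    have s: "sh (length p) x \<in> cantor d" using x cone_cantor sh_cantor by metis
    have "f x = f (hw p (sh (length p) x))" using cone_decomp[OF x] by simp
    also have "... = hw q (bact g (sh (length p) x))" using Ve k(1) s p_def q_def g_def by blast
    finally show ?thesis .
  qed
  define y where "y = f \<kappa>"
  obtain N where N: "y N \<noteq> \<kappa> N" using fk y_def by (metis ext)
  define L where "L = length p + N + 1"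
  define u where "u = map \<kappa> [0..<L]"
  have uw: "u \<in> words d" using cantor_prefix_words[OF kc] u_def by simp
  have lu: "length u = L" by (simp add: u_def)
  define U where "U = cone d u"
  have inU: "x \<in> U \<longleftrightarrow> x \<in> cantor d \<and> (\<forall>i<L. x i = \<kappa> i)" for x
    by (auto simp: U_def cone_def u_def)
  have kp: "\<forall>i<length p. \<kappa> i = p ! i" using k(2) p_def by (simp add: cone_def)
  have U1: "x \<in> cone d p" if x: "x \<in> U" for x
  proof (rule cone_agree)
    show "x \<in> cantor d" using x inU by blast
    show "\<forall>i<length p. x i = p ! i" using x inU kp L_def by auto
  qed
  have U2: "f x \<notin> U" if x: "x \<in> U" for x
  proof
    assume fx: "f x \<in> U"
    have xk: "\<forall>i<L. x i = \<kappa> i" using x inU by blast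
    have kU: "\<kappa> \<in> U" using inU kc by blast
    have e1: "f x = hw q (bact g (sh (length p) x))" using fform U1 x by blast
    have e2: "y = hw q (bact g (sh (length p) \<kappa>))" using fform U1 kU y_def by blast
    have "f x N = y N"
    proof (cases "N < length q")
      case True
      then show ?thesis using e1 e2 by (simp add: hw_def)
    next
      case False
      define M where "M = N - length q"
      have eqm: "map (sh (length p) x) [0..<Suc M] = map (sh (length p) \<kappa>) [0..<Suc M]"
        using xk L_def M_def by (auto simp: sh_def)
      have "bact g (sh (length p) x) M = bact g (sh (length p) \<kappa>) M"
        unfolding bact_def eqm ..
      then show ?thesis using e1 e2 False M_def by (simp add: hw_def)
    qed
    moreover have "f x N = \<kappa> N" using fx inU L_def by auto
    ultimately show False using N by simp
  qed
  have U3: "x1 = x2" if x1: "x1 \<in> U" and x2: "x2 \<in> U" and e: "f x1 = f x2" for x1 x2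
  proof -
    have c1: "x1 \<in> cone d p" and c2: "x2 \<in> cone d p" using U1 x1 x2 by blast+
    have s1: "sh (length p) x1 \<in> cantor d" using c1 cone_cantor sh_cantor by metis
    have s2: "sh (length p) x2 \<in> cantor d" using c2 cone_cantor sh_cantor by metis
    have "hw q (bact g (sh (length p) x1)) = hw q (bact g (sh (length p) x2))"
      using fform c1 c2 e by metis
    then have "bact g (sh (length p) x1) = bact g (sh (length p) x2)" by (rule hw_inj)
    then have "sh (length p) x1 = sh (length p) x2" using bact_inj[OF g d1 s1 s2] by simp
    then show ?thesis using cone_decomp[OF c1] cone_decomp[OF c2] by metis
  qed
  define w where "w = (\<lambda>m. u @ replicate m d)"
  define \<Phi> where "\<Phi> = (\<lambda>m. loc d (w m) (th d))"
  have ww: "w m \<in> words d" for m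
  proof -
    have "set (replicate m d) \<subseteq> {1..d}" using d by (induction m) auto
    then have "replicate m d \<in> words d" by (simp add: words_def)
    then show ?thesis using uw by (simp add: w_def)
  qed
  have \<Phi>F: "\<Phi> m \<in> Fgrp d" for m using loc_F[OF d1 ww th_F[OF d]] \<Phi>_def by simp
  have wU: "cone d (w m) \<subseteq> U" for m using cone_append_sub U_def w_def by metis
  have P1: "\<Phi> m x = x" if "x \<notin> U" for m x
    using that wU loc_out \<Phi>_def by (metis subsetD)
  have P2: "\<Phi> m x \<in> U" if x: "x \<in> U" for m x
  proof (cases "x \<in> cone d (w m)")
    case True
    then show ?thesis using loc_in_cone[OF th_F[OF d] ww True] wU \<Phi>_def by auto
  next
    case False
    then show ?thesis using x loc_out \<Phi>_def by metis
  qed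
  have bj: "bij (\<Phi> m)" for m using F_bij[OF \<Phi>F] .
  have invU: "inv (\<Phi> m) x \<in> U" if x: "x \<in> U" for m x
  proof (rule ccontr)
    assume nz: "inv (\<Phi> m) x \<notin> U"
    have "\<Phi> m (inv (\<Phi> m) x) = x" using bj bij_is_surj surj_f_inv_f by metis
    then show False using P1[OF nz] nz x by simp
  qed
  define c where "c = (\<lambda>m. \<Phi> m \<circ> f \<circ> inv (\<Phi> m))"
  have cU: "c m x = f (inv (\<Phi> m) x)" if x: "x \<in> U" for m x
    using P1[OF U2[OF invU[OF x]]] c_def by simp
  define pp :: "nat \<Rightarrow> nat" where "pp = hw [1] (\<lambda>_. 2)"
  have ppc: "pp \<in> cantor d" using d by (simp add: pp_def cantor_def hw_def)
  have pp0: "pp 0 = 1" by (simp add: pp_def)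
  have thpp: "th d pp \<noteq> pp"
  proof
    assume h: "th d pp = pp"
    have "th d pp = hw [1] pp" using th_in[OF ppc] pp0 d by simp
    then have "th d pp 1 = 1" using pp0 by simp
    moreover have "pp 1 = 2" by (simp add: pp_def hw_def)
    ultimately show False using h by simp
  qed
  have neq: "c m \<noteq> c m'" if mm: "m < m'" for m m'
  proof
    assume ceq: "c m = c m'"
    define z where "z = hw (w m) pp"
    have zc: "z \<in> cone d (w m)" using hw_cone[OF ww ppc] z_def by simp
    have zU: "z \<in> U" using zc wU by blast
    have "\<Phi> m z = hw (w m) (th d pp)" using loc_at[OF zc] \<Phi>_def z_def by simp
    then have Pz: "\<Phi> m z \<noteq> z" using thpp hw_inj z_def by metis
    have "z \<notin> cone d (w m')"
    proof
      assume zc': "z \<in> cone d (w m')"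
      have i: "length u + m < length (w m')" using mm by (simp add: w_def)
      have "z (length u + m) = w m' ! (length u + m)" using zc' i by (simp add: cone_def)
      moreover have "w m' ! (length u + m) = d" using mm by (simp add: w_def nth_append)
      moreover have "z (length u + m) = 1" using pp0 by (simp add: z_def w_def hw_def)
      ultimately show False using d by simp
    qed
    then have Pz': "\<Phi> m' z = z" using loc_out \<Phi>_def by metis
    define x where "x = \<Phi> m z"
    have xU: "x \<in> U" using P2[OF zU] x_def by simp
    have "c m x = f z" using cU[OF xU] x_def bj bij_is_inj inv_f_f by metis
    moreover have "c m' x = f (inv (\<Phi> m') x)" using cU[OF xU] .
    ultimately have "f z = f (inv (\<Phi> m') x)" using ceq by simp
    then have "z = inv (\<Phi> m') x" using U3[OF zU invU[OF xU]] by simp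
    then have "\<Phi> m' z = x" using bj bij_is_surj surj_f_inv_f by metis
    then show False using Pz Pz' x_def by simp
  qed
  have injc: "inj c"
  proof (rule injI)
    fix m m' assume "c m = c m'"
    then show "m = m'" using neq by (metis linorder_neqE_nat)
  qed
  have sub: "range c \<subseteq> {\<phi> \<circ> f \<circ> inv \<phi> | \<phi>. \<phi> \<in> Fgrp d}"
    using \<Phi>F c_def by blast
  have "infinite (range c)"
  proof
    assume "finite (range c)"
    then have "finite (UNIV :: nat set)" using finite_imageD injc by blast
    then show False by simp
  qed
  then show ?thesis using sub infinite_super by blast
qed

end
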